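(* Let $\Omega$ be a pointed solid closed convex cone in a finite-dimensional real inner product space $X$ with $\Omega^*$ facially compact and locally smooth, and $1\le j\le d$. Let $(E,F),(E,F_k^i)\in\mathcal P_j$ for $k\in\mathbb N$, $i=0,1$, with $F_k^i\to F$ (Fell topology) as $k\to\infty$, and let $\varepsilon_k\to0^+$. If the limit $v=\lim_k\varepsilon_k^{-1}\bigl(e_{F_k^0}(E)-e_{F_k^1}(E)\bigr)$ exists, then $v\in E_{1/2}(F)$.
   Context: $A^*=\{y:\langle y,a\rangle\ge0\ \forall a\in A\}$, $A^\circledast=A^*\cap\operatorname{span}A$. Faces: subsets $F$ of a convex set such that every segment with midpoint in $F$ lies in $F$. $0=n_0<\dots<n_d=\dim X$ are the dimensions of faces of $\Omega^*$, $P_j$ the faces of dimension $n_{d-j}$ with the Fell topology (from closed subsets of $X$); facially compact: each $P_j$ compact. Modular face of a cone $C$: a face $E$ containing a face of dimension $\max\{\dim G:G\text{ face of }C,\dim G<\dim E\}$; smooth: relative interiors of those maximal-dimensional proper faces consist of regular points of $E$; locally smooth: all modular faces smooth. $\mathcal P_j=\{(E,F)\in P_{j-1}\times P_j:E\supset F\}$; $e_F(E)$ is the unit generator of the extreme ray $F^\perp\cap E^\circledast$ of $E^\circledast$; $E_{1/2}(F)=\operatorname{span}(E)\cap F^\perp\cap e_F(E)^\perp$. *)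

theory Defs
  imports "HOL-Analysis.Analysis"
begin

definition dual_cone :: "'a::euclidean_space set \<Rightarrow> 'a set" where
  "dual_cone A = {y. \<forall>a\<in>A. y \<bullet> a \<ge> 0}"

definition rel_dual_cone :: "'a::euclidean_space set \<Rightarrow> 'a set" where
  "rel_dual_cone A = dual_cone A \<inter> span A"

definition orth :: "'a::euclidean_space set \<Rightarrow> 'a set" where
  "orth A = {y. \<forall>a\<in>A. y \<bullet> a = 0}"

definition pointed_solid_closed_convex_cone :: "'a::euclidean_space set \<Rightarrow> bool" where
  "pointed_solid_closed_convex_cone \<Omega> \<longleftrightarrow>
     convex_cone \<Omega> \<and> closed \<Omega> \<and> interior \<Omega> \<noteq> {} \<and> \<Omega> \<inter> uminus ` \<Omega> = {0}"

definition faces :: "'a::euclidean_space set \<Rightarrow> 'a set set" where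
  "faces C = {G. G face_of C \<and> G \<noteq> {}}"

definition face_dims :: "'a::euclidean_space set \<Rightarrow> nat set" where
  "face_dims C = dim ` faces C"

definition face_dim_n :: "'a::euclidean_space set \<Rightarrow> nat \<Rightarrow> nat" where
  "face_dim_n C i = sorted_list_of_set (face_dims C) ! i"

definition face_dim_d :: "'a::euclidean_space set \<Rightarrow> nat" where
  "face_dim_d C = card (face_dims C) - 1"

definition P_faces :: "'a::euclidean_space set \<Rightarrow> nat \<Rightarrow> 'a set set" where
  "P_faces C j = {G \<in> faces C. dim G = face_dim_n C (face_dim_d C - j)}"

definition P_pairs :: "'a::euclidean_space set \<Rightarrow> nat \<Rightarrow> ('a set \<times> 'a set) set" where
  "P_pairs C j = {(E, F). E \<in> P_faces C (j - 1) \<and> F \<in> P_faces C j \<and> F \<subseteq> E}"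

definition fell_topology :: "'a::euclidean_space set topology" where
  "fell_topology = subtopology
     (topology_generated_by
        ({{A. A \<inter> K = {}} | K. compact K} \<union> {{A. A \<inter> U \<noteq> {}} | U. open U}))
     {A. closed A}"

definition facially_compact :: "'a::euclidean_space set \<Rightarrow> bool" where
  "facially_compact C \<longleftrightarrow> (\<forall>j \<le> face_dim_d C. compactin fell_topology (P_faces C j))"

text \<open>Regular point of a cone E (relative to span E): at most one supporting
  hyperplane direction, i.e. the dual face of x in E^circledast has dimension at most 1.\<close>
definition regular_point :: "'a::euclidean_space set \<Rightarrow> 'a \<Rightarrow> bool" where
  "regular_point E x \<longleftrightarrow> x \<in> E \<and> dim {y \<in> rel_dual_cone E. y \<bullet> x = 0} \<le> 1"

definition sub_dim :: "'a::euclidean_space set \<Rightarrow> 'a set \<Rightarrow> nat" where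
  "sub_dim C E = Max {dim G | G. G \<in> faces C \<and> dim G < dim E}"

definition modular_face :: "'a::euclidean_space set \<Rightarrow> 'a set \<Rightarrow> bool" where
  "modular_face C E \<longleftrightarrow> E \<in> faces C \<and> (\<exists>G \<in> faces C. dim G < dim E) \<and>
     (\<exists>G \<in> faces C. G \<subseteq> E \<and> dim G = sub_dim C E)"

definition smooth_face :: "'a::euclidean_space set \<Rightarrow> 'a set \<Rightarrow> bool" where
  "smooth_face C E \<longleftrightarrow>
     (\<forall>G \<in> faces C. G \<subseteq> E \<and> dim G = sub_dim C E \<longrightarrow>
        (\<forall>x \<in> rel_interior G. regular_point E x))"

definition locally_smooth :: "'a::euclidean_space set \<Rightarrow> bool" where
  "locally_smooth C \<longleftrightarrow> (\<forall>E. modular_face C E \<longrightarrow> smooth_face C E)"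

definition e_gen :: "'a::euclidean_space set \<Rightarrow> 'a set \<Rightarrow> 'a" where
  "e_gen F E = (THE u. norm u = 1 \<and> orth F \<inter> rel_dual_cone E = {t *\<^sub>R u | t. t \<ge> 0})"

definition E_half :: "'a::euclidean_space set \<Rightarrow> 'a set \<Rightarrow> 'a set" where
  "E_half E F = span E \<inter> orth F \<inter> orth {e_gen F E}"

end

theory Submission
  imports Defs
begin

lemma face_dims_facts:
  fixes C :: "'a::euclidean_space set"
  assumes j1: "1 \<le> j" and jd: "j \<le> face_dim_d C"
    and E: "E \<in> P_faces C (j - 1)" and G: "G \<in> P_faces C j"
  shows "dim G < dim E \<and> sub_dim C E = dim G"
proof -
  define xs where "xs = sorted_list_of_set (face_dims C)"
  have fin: "finite (face_dims C)"
  proof (rule finite_subset)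
    show "face_dims C \<subseteq> {..DIM('a)}"
      unfolding face_dims_def using dim_subset_UNIV by fastforce
  qed simp
  have ss: "sorted_wrt (<) xs" unfolding xs_def by simp
  have so: "sorted xs" unfolding xs_def by simp
  have len: "length xs = card (face_dims C)" unfolding xs_def by simp
  have setx: "set xs = face_dims C" unfolding xs_def using fin by simp
  let ?d = "face_dim_d C"
  have dl: "?d < length xs" using len j1 jd unfolding face_dim_d_def by linarith
  have dG: "dim G = xs ! (?d - j)" using G unfolding P_faces_def face_dim_n_def xs_def by simp
  have dE: "dim E = xs ! (?d - j + 1)" using E j1 jd unfolding P_faces_def face_dim_n_def xs_def
    by (simp add: Suc_diff_le)
  have lt: "dim G < dim E" unfolding dG dE
    using sorted_wrt_nth_less[OF ss, of "?d - j" "?d - j + 1"] dl jd j1 by simp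
  have Gf: "G \<in> faces C" using G unfolding P_faces_def by simp
  define M where "M = {dim H | H. H \<in> faces C \<and> dim H < dim E}"
  have Msub: "M \<subseteq> face_dims C" unfolding M_def face_dims_def by auto
  have finM: "finite M" using Msub fin finite_subset by blast
  have GM: "dim G \<in> M" unfolding M_def using Gf lt by blast
  have le: "m \<le> dim G" if "m \<in> M" for m
  proof -
    have "m \<in> set xs" using that Msub setx by auto
    then obtain i where i: "i < length xs" "m = xs ! i" by (metis in_set_conv_nth)
    have mE: "m < dim E" using that unfolding M_def by auto
    have "i \<le> ?d - j"
    proof (rule ccontr)
      assume "\<not> i \<le> ?d - j"
      then have "?d - j + 1 \<le> i" by simp
      then have "xs ! (?d - j + 1) \<le> xs ! i" using sorted_nth_mono[OF so] i by blast
      then show False using mE i dE by simp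
    qed
    then show ?thesis using sorted_nth_mono[OF so, of i "?d - j"] dl i dG by simp
  qed
  have "Max M = dim G" using GM le finM by (intro Max_eqI) auto
  then show ?thesis using lt unfolding sub_dim_def M_def by simp
qed

lemma face_cone:
  fixes C :: "'a::euclidean_space set"
  assumes cc: "convex_cone C" and EC: "E face_of C" and z: "z \<in> E" and c: "c \<ge> 0"
  shows "c *\<^sub>R z \<in> E"
proof (cases "z = 0")
  case True then show ?thesis using z by simp
next
  case False
  have zC: "z \<in> C" using z face_of_imp_subset[OF EC] by auto
  have big: "b *\<^sub>R z \<in> E \<and> 0 \<in> E" if b: "b > 1" for b
  proof -
    have "0 \<in> C" using cc by (rule convex_cone_contains_0)
    moreover have "b *\<^sub>R z \<in> C" using cc zC b by (simp add: convex_cone_scaleR)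
    moreover have "z \<in> open_segment 0 (b *\<^sub>R z)"
      unfolding in_segment
    proof
      show "0 \<noteq> b *\<^sub>R z" using False b by simp
      show "\<exists>u>0. u < 1 \<and> z = (1 - u) *\<^sub>R 0 + u *\<^sub>R b *\<^sub>R z"
        using b by (intro exI[of _ "1/b"]) auto
    qed
    ultimately show ?thesis using EC z unfolding face_of_def by blast
  qed
  show ?thesis
  proof (cases "c > 1")
    case True then show ?thesis using big by blast
  next
    case False
    have "0 \<in> E" using big[of 2] by simp
    have "convex E" using EC face_of_imp_convex by blast
    then have "(1 - c) *\<^sub>R 0 + c *\<^sub>R z \<in> E"
      using \<open>0 \<in> E\<close> z c False unfolding convex_def by (metis diff_add_cancel diff_ge_0_iff_ge not_less add.commute)
    then show ?thesis by simp
  qed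
qed

lemma ray_lemma:
  fixes C E G :: "'a::euclidean_space set"
  assumes cc: "convex_cone C" and EC: "E face_of C" and GC: "G face_of C" and Gne: "G \<noteq> {}"
    and GE: "G \<subseteq> E" and dlt: "dim G < dim E"
    and reg: "\<And>x. x \<in> rel_interior G \<Longrightarrow> regular_point E x"
  shows "norm (e_gen G E) = 1 \<and> orth G \<inter> rel_dual_cone E = {t *\<^sub>R e_gen G E | t. t \<ge> 0}"
proof -
  have cG: "convex G" using GC face_of_imp_convex by blast
  have cE: "convex E" using EC face_of_imp_convex by blast
  obtain x where x: "x \<in> rel_interior G" using Gne cG rel_interior_eq_empty by blast
  have xG: "x \<in> G" using x rel_interior_subset by blast
  have xE: "x \<in> E" using xG GE by blast
  define S where "S = {y \<in> rel_dual_cone E. y \<bullet> x = 0}"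
  have Seq: "orth G \<inter> rel_dual_cone E = S"
  proof
    show "orth G \<inter> rel_dual_cone E \<subseteq> S" unfolding S_def orth_def using xG by auto
    show "S \<subseteq> orth G \<inter> rel_dual_cone E"
    proof
      fix y assume yS: "y \<in> S"
      have ynn: "\<And>z. z \<in> G \<Longrightarrow> y \<bullet> z \<ge> 0"
        using yS GE unfolding S_def rel_dual_cone_def dual_cone_def by auto
      have T: "G \<inter> {z. y \<bullet> z = 0} face_of G"
        by (rule face_of_Int_supporting_hyperplane_ge[OF cG]) (use ynn in auto)
      have "G \<subseteq> G \<inter> {z. y \<bullet> z = 0}"
        by (rule subset_of_face_of[OF T]) (use x xG yS S_def in auto)
      then show "y \<in> orth G \<inter> rel_dual_cone E" using yS unfolding S_def orth_def by auto
    qed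
  qed
  have dimS: "dim S \<le> 1" using reg[OF x] unfolding regular_point_def S_def by simp
  have E0: "0 \<in> E" using face_cone[OF cc EC xE, of 0] by simp
  have x2: "2 *\<^sub>R x \<in> E" using face_cone[OF cc EC xE, of 2] by simp
  have xnot: "x \<notin> rel_interior E"
  proof
    assume xr: "x \<in> rel_interior E"
    have GfE: "G face_of E" using face_of_subset[OF GC GE face_of_imp_subset[OF EC]] .
    have "E \<subseteq> G" by (rule subset_of_face_of[OF GfE]) (use xr xG in auto)
    then have "dim E \<le> dim G" by (rule dim_subset)
    then show False using dlt by simp
  qed
  obtain a where a0: "a \<noteq> 0" and a1: "\<And>y. y \<in> E \<Longrightarrow> a \<bullet> x \<le> a \<bullet> y"
    and a2: "\<And>y. y \<in> rel_interior E \<Longrightarrow> a \<bullet> x < a \<bullet> y"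
    using supporting_hyperplane_rel_boundary[OF cE xE xnot] by blast
  have ax0: "a \<bullet> x = 0" using a1[OF E0] a1[OF x2] by simp
  obtain y0 where y0: "y0 \<in> rel_interior E" using xE cE rel_interior_eq_empty by blast
  have y0E: "y0 \<in> E" using y0 rel_interior_subset by blast
  have ay0: "a \<bullet> y0 > 0" using a2[OF y0] ax0 by simp
  obtain a' b where a'sp: "a' \<in> span E" and borth: "\<And>w. w \<in> span E \<Longrightarrow> orthogonal b w"
    and ab: "a = a' + b"
    using orthogonal_subspace_decomp_exists[of E a] by blast
  have key: "a' \<bullet> w = a \<bullet> w" if "w \<in> span E" for w
    using borth[OF that] ab unfolding orthogonal_def by (simp add: inner_add_left)
  have Esp: "\<And>z. z \<in> E \<Longrightarrow> z \<in> span E" using span_superset by blast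
  have a'S: "a' \<in> S"
    unfolding S_def rel_dual_cone_def dual_cone_def
    using key Esp a1 ax0 a'sp xE by auto
  have a'y0: "a' \<bullet> y0 > 0" using key[OF Esp[OF y0E]] ay0 by simp
  have a'0: "a' \<noteq> 0" using a'y0 by auto
  have Sray: "\<exists>c\<ge>0. s = c *\<^sub>R a'" if sS: "s \<in> S" for s
  proof -
    have "s \<in> span {a'}"
    proof (rule ccontr)
      assume ns: "s \<notin> span {a'}"
      have ind: "independent {s, a'}"
        using ns a'0 by (simp add: independent_insert)
      have "s \<noteq> a'" using ns span_base[of a' "{a'}"] by auto
      then have "card {s, a'} = 2" by simp
      moreover have "card {s, a'} \<le> dim S"
        by (rule independent_card_le_dim) (use ind sS a'S in auto)
      ultimately show False using dimS by simp
    qed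
    then obtain c where c: "s = c *\<^sub>R a'" by (auto simp: span_singleton)
    have "s \<bullet> y0 \<ge> 0" using sS y0E unfolding S_def rel_dual_cone_def dual_cone_def by auto
    then have "c \<ge> 0" using c a'y0 by (simp add: zero_le_mult_iff)
    then show ?thesis using c by blast
  qed
  define u where "u = (1 / norm a') *\<^sub>R a'"
  have nu: "norm u = 1" unfolding u_def using a'0 by simp
  have Seq2: "S = {t *\<^sub>R u | t. t \<ge> 0}"
  proof
    show "S \<subseteq> {t *\<^sub>R u | t. t \<ge> 0}"
    proof
      fix s assume "s \<in> S"
      then obtain c where c: "c \<ge> 0" "s = c *\<^sub>R a'" using Sray by blast
      have "s = (c * norm a') *\<^sub>R u" unfolding u_def using c a'0 by simp
      then show "s \<in> {t *\<^sub>R u | t. t \<ge> 0}" using c by fastforce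
    qed
    show "{t *\<^sub>R u | t. t \<ge> 0} \<subseteq> S"
    proof
      fix s assume "s \<in> {t *\<^sub>R u | t. t \<ge> 0}"
      then obtain t where t: "t \<ge> 0" "s = t *\<^sub>R u" by blast
      define k where "k = t / norm a'"
      have k: "k \<ge> 0" "s = k *\<^sub>R a'" unfolding k_def using t by (auto simp: u_def)
      have "k *\<^sub>R a' \<in> S"
        using a'S k(1) unfolding S_def rel_dual_cone_def dual_cone_def
        by (auto simp: span_mul)
      then show "s \<in> S" using k by simp
    qed
  qed
  have Pu: "norm u = 1 \<and> orth G \<inter> rel_dual_cone E = {t *\<^sub>R u | t. t \<ge> 0}"
    using nu Seq Seq2 by simp
  have uniq: "u' = u" if P: "norm u' = 1 \<and> orth G \<inter> rel_dual_cone E = {t *\<^sub>R u' | t. t \<ge> 0}" for u'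
  proof -
    have "u \<in> {t *\<^sub>R u' | t. t \<ge> 0}" proof -
      have "u \<in> {t *\<^sub>R u | t. t \<ge> 0}" by (rule CollectI, rule exI[of _ 1]) simp
      then show ?thesis using Pu P by simp
    qed
    then obtain t where t: "t \<ge> 0" "u = t *\<^sub>R u'" by blast
    have "norm u = t" using t P by simp
    then have "t = 1" using nu by simp
    then show ?thesis using t by simp
  qed
  have "e_gen G E = u" unfolding e_gen_def using Pu uniq by (rule the_equality)
  then show ?thesis using Pu by simp
qed

lemma fell_approx:
  fixes G :: "nat \<Rightarrow> 'a::euclidean_space set"
  assumes lim: "limitin fell_topology G F sequentially" and cl: "\<And>k. closed (G k)"
    and ne: "\<And>k. G k \<noteq> {}" and xF: "x \<in> F"
  shows "\<exists>y. (\<forall>k. y k \<in> G k) \<and> y \<longlonglongrightarrow> x"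
proof -
  have "\<forall>k. \<exists>yk \<in> G k. \<forall>z \<in> G k. dist x yk \<le> dist x z"
    using distance_attains_inf[OF cl ne] by metis
  then obtain y where y1: "\<And>k. y k \<in> G k" and y2: "\<And>k z. z \<in> G k \<Longrightarrow> dist x (y k) \<le> dist x z"
    by metis
  have Ftop: "F \<in> topspace fell_topology" using lim limitin_sequentially by metis
  then have Fcl: "closed F" unfolding fell_topology_def by simp
  have ev: "\<exists>N. \<forall>k\<ge>N. G k \<inter> ball x r \<noteq> {}" if r: "r > 0" for r
  proof -
    define U where "U = {A::'a set. closed A \<and> A \<inter> ball x r \<noteq> {}}"
    have "openin (topology_generated_by
        ({{A. A \<inter> K = {}} | K. compact K} \<union> {{A::'a set. A \<inter> U \<noteq> {}} | U. open U}))
        {A. A \<inter> ball x r \<noteq> {}}"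
      by (rule topology_generated_by_Basis) blast
    then have "openin fell_topology U"
      unfolding fell_topology_def openin_subtopology U_def by blast
    moreover have "F \<in> U" unfolding U_def using Fcl xF r by auto
    ultimately obtain N where "\<forall>n. N \<le> n \<longrightarrow> G n \<in> U"
      using lim unfolding limitin_sequentially by blast
    then show ?thesis unfolding U_def by blast
  qed
  have "y \<longlonglongrightarrow> x"
    unfolding lim_sequentially
  proof (intro allI impI)
    fix r :: real assume r: "r > 0"
    obtain N where N: "\<forall>k\<ge>N. G k \<inter> ball x r \<noteq> {}" using ev[OF r] by blast
    have "dist (y k) x < r" if kN: "k \<ge> N" for k
    proof -
      obtain z where "z \<in> G k" "dist x z < r" proof -
        have "G k \<inter> ball x r \<noteq> {}" using N kN by blast
        then show ?thesis using that by (auto simp: mem_ball)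
      qed
      then show ?thesis using y2[of z k] by (simp add: dist_commute)
    qed
    then show "\<exists>N. \<forall>n\<ge>N. dist (y n) x < r" by blast
  qed
  then show ?thesis using y1 by blast
qed

theorem mainTheorem13:
  fixes \<Omega> :: "'a::euclidean_space set"
    and j :: nat and E F :: "'a set"
    and F0 F1 :: "nat \<Rightarrow> 'a set"
    and \<epsilon> :: "nat \<Rightarrow> real" and v :: 'a
  assumes "pointed_solid_closed_convex_cone \<Omega>"
    and "facially_compact (dual_cone \<Omega>)"
    and "locally_smooth (dual_cone \<Omega>)"
    and "1 \<le> j" "j \<le> face_dim_d (dual_cone \<Omega>)"
    and "(E, F) \<in> P_pairs (dual_cone \<Omega>) j"
    and "\<And>k. (E, F0 k) \<in> P_pairs (dual_cone \<Omega>) j"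
    and "\<And>k. (E, F1 k) \<in> P_pairs (dual_cone \<Omega>) j"
    and "limitin fell_topology F0 F sequentially"
    and "limitin fell_topology F1 F sequentially"
    and "\<And>k. \<epsilon> k > 0" "\<epsilon> \<longlonglongrightarrow> 0"
    and "(\<lambda>k. (1 / \<epsilon> k) *\<^sub>R (e_gen (F0 k) E - e_gen (F1 k) E)) \<longlonglongrightarrow> v"
  shows "v \<in> E_half E F"
proof -
  note A = assms
  define C where "C = dual_cone \<Omega>"
  have ccC: "convex_cone C"
    unfolding convex_cone_iff C_def dual_cone_def
    by (auto simp: inner_add_left)
  have dceq: "C = (\<Inter>a\<in>\<Omega>. {y. 0 \<le> y \<bullet> a})" unfolding C_def dual_cone_def by auto
  have clC: "closed C" unfolding dceq
    by (intro closed_INT ballI) (simp add: inner_commute closed_halfspace_ge)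
  have cvC: "convex C" using ccC unfolding convex_cone_def by simp
  have EP: "E \<in> P_faces C (j - 1)" and FP: "F \<in> P_faces C j" and FE: "F \<subseteq> E"
    using A(6) unfolding P_pairs_def C_def by auto
  have F0P: "\<And>k. F0 k \<in> P_faces C j" and F0E: "\<And>k. F0 k \<subseteq> E"
    using A(7) unfolding P_pairs_def C_def by auto
  have F1P: "\<And>k. F1 k \<in> P_faces C j" and F1E: "\<And>k. F1 k \<subseteq> E"
    using A(8) unfolding P_pairs_def C_def by auto
  have fd: "dim G < dim E \<and> sub_dim C E = dim G" if "G \<in> P_faces C j" for G
    using face_dims_facts[OF A(4) A(5)[folded C_def] EP that] .
  have Ef: "E \<in> faces C" using EP unfolding P_faces_def by simp
  have EC: "E face_of C" using Ef unfolding faces_def by simp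
  have Ff: "F \<in> faces C" using FP unfolding P_faces_def by simp
  have "modular_face C E"
    unfolding modular_face_def using Ef Ff FE fd[OF FP] by auto
  then have sm: "smooth_face C E" using A(3) unfolding locally_smooth_def C_def by blast
  have ray: "norm (e_gen G E) = 1 \<and> orth G \<inter> rel_dual_cone E = {t *\<^sub>R e_gen G E | t. t \<ge> 0}"
    if GP: "G \<in> P_faces C j" and GE: "G \<subseteq> E" for G
  proof -
    have Gf: "G \<in> faces C" using GP unfolding P_faces_def by simp
    show ?thesis
    proof (rule ray_lemma[OF ccC EC _ _ GE])
      show "G face_of C" "G \<noteq> {}" using Gf unfolding faces_def by auto
      show "dim G < dim E" using fd[OF GP] by simp
      show "\<And>x. x \<in> rel_interior G \<Longrightarrow> regular_point E x"
        using sm Gf GE fd[OF GP] unfolding smooth_face_def by auto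
    qed
  qed
  have eprops: "norm (e_gen G E) = 1 \<and> e_gen G E \<in> orth G \<and> e_gen G E \<in> span E
     \<and> (\<forall>z\<in>E. e_gen G E \<bullet> z \<ge> 0)"
    if GP: "G \<in> P_faces C j" and GE: "G \<subseteq> E" for G
  proof -
    have "e_gen G E \<in> {t *\<^sub>R e_gen G E | t. t \<ge> 0}" by (rule CollectI, rule exI[of _ 1]) simp
    then have "e_gen G E \<in> orth G \<inter> rel_dual_cone E" using ray[OF GP GE] by simp
    then show ?thesis using ray[OF GP GE] unfolding rel_dual_cone_def dual_cone_def by auto
  qed
  have Gcl: "closed G \<and> G \<noteq> {}" if GP: "G \<in> P_faces C j" for G
  proof -
    have "G face_of C" "G \<noteq> {}" using GP unfolding P_faces_def faces_def by auto
    then show ?thesis using face_of_imp_closed[OF cvC clC] by blast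
  qed
  define e0 where "e0 k = e_gen (F0 k) E" for k
  define e1 where "e1 k = e_gen (F1 k) E" for k
  define eF where "eF = e_gen F E"
  define w where "w k = (1 / \<epsilon> k) *\<^sub>R (e0 k - e1 k)" for k
  have wv: "w \<longlonglongrightarrow> v" using A(13) unfolding w_def e0_def e1_def .
  have e0p: "\<And>k. norm (e0 k) = 1 \<and> e0 k \<in> orth (F0 k) \<and> e0 k \<in> span E \<and> (\<forall>z\<in>E. e0 k \<bullet> z \<ge> 0)"
    unfolding e0_def using eprops[OF F0P F0E] by blast
  have e1p: "\<And>k. norm (e1 k) = 1 \<and> e1 k \<in> orth (F1 k) \<and> e1 k \<in> span E \<and> (\<forall>z\<in>E. e1 k \<bullet> z \<ge> 0)"
    unfolding e1_def using eprops[OF F1P F1E] by blast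
  have vspan: "v \<in> span E"
  proof (rule Lim_in_closed_set[OF closed_span _ _ wv])
    show "\<forall>\<^sub>F x in sequentially. w x \<in> span E"
      unfolding w_def using e0p e1p by (intro always_eventually allI span_mul span_diff) auto
  qed simp
  have vF: "v \<bullet> x = 0" if xF: "x \<in> F" for x
  proof -
    obtain y0 where y0: "\<And>k. y0 k \<in> F0 k" "y0 \<longlonglongrightarrow> x"
      using fell_approx[OF A(9) _ _ xF] Gcl[OF F0P] by blast
    obtain y1 where y1: "\<And>k. y1 k \<in> F1 k" "y1 \<longlonglongrightarrow> x"
      using fell_approx[OF A(10) _ _ xF] Gcl[OF F1P] by blast
    have le: "w k \<bullet> y0 k \<le> 0" for k
    proof -
      have "e0 k \<bullet> y0 k = 0" using e0p[of k] y0(1)[of k] unfolding orth_def by auto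
      moreover have "e1 k \<bullet> y0 k \<ge> 0" using e1p[of k] y0(1)[of k] F0E[of k] by auto
      ultimately show ?thesis using A(11)[of k] unfolding w_def
        by (simp add: inner_diff_left divide_nonpos_pos)
    qed
    have ge: "w k \<bullet> y1 k \<ge> 0" for k
    proof -
      have "e1 k \<bullet> y1 k = 0" using e1p[of k] y1(1)[of k] unfolding orth_def by auto
      moreover have "e0 k \<bullet> y1 k \<ge> 0" using e0p[of k] y1(1)[of k] F1E[of k] by auto
      ultimately show ?thesis using A(11)[of k] unfolding w_def
        by (simp add: inner_diff_left)
    qed
    have t0: "(\<lambda>k. w k \<bullet> y0 k) \<longlonglongrightarrow> v \<bullet> x" by (intro tendsto_inner wv y0(2))
    have t1: "(\<lambda>k. w k \<bullet> y1 k) \<longlonglongrightarrow> v \<bullet> x" by (intro tendsto_inner wv y1(2))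
    have "v \<bullet> x \<le> 0" by (rule tendsto_upperbound[OF t0]) (use le in auto)
    moreover have "v \<bullet> x \<ge> 0" by (rule tendsto_lowerbound[OF t1]) (use ge in auto)
    ultimately show ?thesis by simp
  qed
  have sph: "\<forall>k. e0 k \<in> sphere 0 1" using e0p by simp
  obtain g r where g: "g \<in> sphere 0 1" and r: "strict_mono r" and gl: "(e0 \<circ> r) \<longlonglongrightarrow> g"
    using seq_compactE[OF compact_imp_seq_compact[OF compact_sphere] sph] by blast
  have gF: "g \<in> orth F" unfolding orth_def
  proof (intro CollectI ballI)
    fix x assume xF: "x \<in> F"
    obtain y0 where y0: "\<And>k. y0 k \<in> F0 k" "y0 \<longlonglongrightarrow> x"
      using fell_approx[OF A(9) _ _ xF] Gcl[OF F0P] by blast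
    have "(y0 \<circ> r) \<longlonglongrightarrow> x" using LIMSEQ_subseq_LIMSEQ[OF y0(2) r] .
    then have t: "(\<lambda>k. (e0 \<circ> r) k \<bullet> (y0 \<circ> r) k) \<longlonglongrightarrow> g \<bullet> x" by (intro tendsto_inner gl)
    have "\<And>k. (e0 \<circ> r) k \<bullet> (y0 \<circ> r) k = 0" using e0p y0(1) unfolding orth_def by auto
    then have "(\<lambda>k. (e0 \<circ> r) k \<bullet> (y0 \<circ> r) k) \<longlonglongrightarrow> 0" by simp
    then show "g \<bullet> x = 0" using t LIMSEQ_unique by blast
  qed
  have gspan: "g \<in> span E"
    by (rule Lim_in_closed_set[OF closed_span _ _ gl]) (use e0p in auto)
  have gdual: "g \<bullet> z \<ge> 0" if zE: "z \<in> E" for z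
  proof -
    have t: "(\<lambda>k. (e0 \<circ> r) k \<bullet> z) \<longlonglongrightarrow> g \<bullet> z" by (intro tendsto_inner gl tendsto_const)
    show ?thesis by (rule tendsto_lowerbound[OF t]) (use e0p zE in auto)
  qed
  have "g \<in> orth F \<inter> rel_dual_cone E"
    using gF gspan gdual unfolding rel_dual_cone_def dual_cone_def by auto
  then obtain t where t: "t \<ge> 0" "g = t *\<^sub>R eF" using ray[OF FP FE] unfolding eF_def by auto
  have "norm g = t" using t ray[OF FP FE] unfolding eF_def by simp
  then have "t = 1" using g by simp
  then have geF: "g = eF" using t by simp
  define h where "h k = w k \<bullet> e0 k" for k
  have hid: "h k = \<epsilon> k * (norm (w k))\<^sup>2 / 2" for k
  proof -
    have n0: "e0 k \<bullet> e0 k = 1" using e0p[of k] by (simp add: power2_norm_eq_inner[symmetric])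
    have n1: "e1 k \<bullet> e1 k = 1" using e1p[of k] by (simp add: power2_norm_eq_inner[symmetric])
    have ep: "\<epsilon> k > 0" using A(11) .
    have "(norm (w k))\<^sup>2 = (1 / \<epsilon> k)^2 * (2 - 2 * (e0 k \<bullet> e1 k))"
      unfolding w_def power2_norm_eq_inner
      by (simp add: inner_diff_left inner_diff_right n0 n1 inner_commute power2_eq_square algebra_simps)
    moreover have "h k = (1 / \<epsilon> k) * (1 - e1 k \<bullet> e0 k)"
      unfolding h_def w_def by (simp add: inner_diff_left n0)
    ultimately have q1: "\<epsilon> k * (norm (w k))\<^sup>2 = (1 / \<epsilon> k) * (2 - 2 * (e0 k \<bullet> e1 k))"
      and q2: "h k = (1 / \<epsilon> k) * (1 - e0 k \<bullet> e1 k)"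
      using ep by (simp_all add: inner_commute power2_eq_square)
    show ?thesis unfolding q2 using q1 by (simp add: algebra_simps)
  qed
  have h0: "h \<longlonglongrightarrow> 0"
  proof -
    have "(\<lambda>k. \<epsilon> k * (norm (w k))\<^sup>2) \<longlonglongrightarrow> 0 * (norm v)\<^sup>2"
      by (intro tendsto_mult A(12) tendsto_power tendsto_norm wv)
    then have "(\<lambda>k. \<epsilon> k * (norm (w k))\<^sup>2 / 2) \<longlonglongrightarrow> 0"
      using tendsto_divide[OF _ tendsto_const[of 2]] by fastforce
    then show ?thesis unfolding hid by simp
  qed
  have "(h \<circ> r) \<longlonglongrightarrow> v \<bullet> g"
  proof -
    have "(w \<circ> r) \<longlonglongrightarrow> v" using LIMSEQ_subseq_LIMSEQ[OF wv r] .
    then have "(\<lambda>k. (w \<circ> r) k \<bullet> (e0 \<circ> r) k) \<longlonglongrightarrow> v \<bullet> g" by (intro tendsto_inner gl)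
    then show ?thesis unfolding h_def comp_def .
  qed
  moreover have "(h \<circ> r) \<longlonglongrightarrow> 0" using LIMSEQ_subseq_LIMSEQ[OF h0 r] .
  ultimately have "v \<bullet> g = 0" using LIMSEQ_unique by blast
  then have veF: "v \<bullet> eF = 0" using geF by simp
  show ?thesis
    unfolding E_half_def orth_def eF_def[symmetric]
    using vspan vF veF by auto
qed

end
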